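(* Let $R$ be the ring of integers of a nonarchimedean local field of characteristic not $2$ in which $2$ is a prime element, and let $L\cong\langle 1,-1\rangle$ be a binary $R$-lattice. Then $Q(L) = R^\times\cup 4R$, and \[ Q^\ast(L) = \begin{cases} R^\times\cup 4R & \text{if } R\ne\mathbb{Z}_2,\\ R^\times\cup 8R & \text{if } R=\mathbb{Z}_2.\end{cases} \]
   Context: $\langle 1,-1\rangle$ is the $R$-lattice with Gram matrix $\operatorname{diag}(1,-1)$, with quadratic form $Q(v)=B(v,v)$. $Q(L)=\{Q(v):v\in L\}$ and $Q^\ast(L)=\{Q(v): v\in L \text{ primitive}\}$, where $v$ is primitive if $Rv$ is a direct summand of $L$. *)

theory Defs
  imports Main "HOL-Computational_Algebra.Factorial_Ring"
begin

text \<open>The ring of integers R of a nonarchimedean local field is a complete discrete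
valuation ring with finite residue field (and R determines the field as its fraction field).\<close>

definition dvr_uniformizer :: "'a::idom \<Rightarrow> bool" where
  "dvr_uniformizer p \<longleftrightarrow> p \<noteq> 0 \<and> \<not> p dvd 1 \<and>
     (\<forall>x. x \<noteq> 0 \<longrightarrow> (\<exists>u n. u dvd 1 \<and> x = u * p ^ n))"

definition finite_residue_field :: "'a::idom \<Rightarrow> bool" where
  "finite_residue_field p \<longleftrightarrow> (\<exists>S. finite S \<and> (\<forall>x. \<exists>s\<in>S. p dvd (x - s)))"

definition adically_complete :: "'a::idom \<Rightarrow> bool" where
  "adically_complete p \<longleftrightarrow>
     (\<forall>s :: nat \<Rightarrow> 'a.
        (\<forall>k. \<exists>N. \<forall>m\<ge>N. \<forall>n\<ge>N. p ^ k dvd (s m - s n)) \<longrightarrow>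
        (\<exists>l. \<forall>k. \<exists>N. \<forall>n\<ge>N. p ^ k dvd (s n - l)))"

definition nonarch_local_integer_ring :: "'a::idom itself \<Rightarrow> bool" where
  "nonarch_local_integer_ring _ \<longleftrightarrow>
     (\<exists>p::'a. dvr_uniformizer p \<and> finite_residue_field p \<and> adically_complete p)"

text \<open>Z_2 as the inverse limit of Z/2^n Z: compatible sequences of residues.\<close>

definition z2_carrier :: "(nat \<Rightarrow> int) set" where
  "z2_carrier = {f. (\<forall>n. 0 \<le> f n \<and> f n < 2 ^ n) \<and> (\<forall>n. f (Suc n) mod 2 ^ n = f n)}"

definition z2_add :: "(nat \<Rightarrow> int) \<Rightarrow> (nat \<Rightarrow> int) \<Rightarrow> (nat \<Rightarrow> int)" where
  "z2_add f g = (\<lambda>n. (f n + g n) mod 2 ^ n)"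

definition z2_mult :: "(nat \<Rightarrow> int) \<Rightarrow> (nat \<Rightarrow> int) \<Rightarrow> (nat \<Rightarrow> int)" where
  "z2_mult f g = (\<lambda>n. (f n * g n) mod 2 ^ n)"

definition z2_one :: "nat \<Rightarrow> int" where
  "z2_one = (\<lambda>n. 1 mod 2 ^ n)"

definition iso_to_Z2 :: "'a::comm_ring_1 itself \<Rightarrow> bool" where
  "iso_to_Z2 _ \<longleftrightarrow> (\<exists>\<phi> :: 'a \<Rightarrow> (nat \<Rightarrow> int).
      bij_betw \<phi> UNIV z2_carrier \<and>
      (\<forall>a b. \<phi> (a + b) = z2_add (\<phi> a) (\<phi> b)) \<and>
      (\<forall>a b. \<phi> (a * b) = z2_mult (\<phi> a) (\<phi> b)) \<and>
      \<phi> 1 = z2_one)"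

text \<open>L = R^2 (pairs), Gram matrix diag(1,-1), so Q(x,y) = B(v,v) = x^2 - y^2.\<close>

definition Qform :: "'a::comm_ring_1 \<times> 'a \<Rightarrow> 'a" where
  "Qform v = fst v * fst v - snd v * snd v"

definition smul_pair :: "'a::comm_ring_1 \<Rightarrow> 'a \<times> 'a \<Rightarrow> 'a \<times> 'a" where
  "smul_pair r v = (r * fst v, r * snd v)"

definition add_pair :: "'a::comm_ring_1 \<times> 'a \<Rightarrow> 'a \<times> 'a \<Rightarrow> 'a \<times> 'a" where
  "add_pair v w = (fst v + fst w, snd v + snd w)"

definition is_submodule :: "('a::comm_ring_1 \<times> 'a) set \<Rightarrow> bool" where
  "is_submodule W \<longleftrightarrow> (0, 0) \<in> W \<and> (\<forall>a\<in>W. \<forall>b\<in>W. add_pair a b \<in> W) \<and>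
     (\<forall>r. \<forall>a\<in>W. smul_pair r a \<in> W)"

definition primitive :: "'a::comm_ring_1 \<times> 'a \<Rightarrow> bool" where
  "primitive v \<longleftrightarrow> (\<exists>W. is_submodule W \<and>
     (\<forall>z. \<exists>r. \<exists>w\<in>W. z = add_pair (smul_pair r v) w) \<and>
     (\<forall>r. smul_pair r v \<in> W \<longrightarrow> smul_pair r v = (0, 0)))"

definition Q_values :: "('a::comm_ring_1) set" where
  "Q_values = {Qform v | v. True}"

definition Q_prim_values :: "('a::comm_ring_1) set" where
  "Q_prim_values = {Qform v | v. primitive v}"

end

theory Submission
  imports Defs
begin


lemma two_p:
  fixes p :: "'a::idom"
  assumes u: "dvr_uniformizer p" and t: "prime_elem (2::'a)"
  shows "p dvd 2" "2 dvd p"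
proof -
  have "(2::'a) \<noteq> 0" using t by auto
  then obtain v n where v: "v dvd 1" "(2::'a) = v * p ^ n" using u unfolding dvr_uniformizer_def by blast
  have "n \<noteq> 0"
  proof
    assume "n = 0" then have "(2::'a) dvd 1" using v by simp
    then show False using t by (simp add: prime_elem_def)
  qed
  then have "p dvd p ^ n" by (simp add: dvd_power)
  then show "p dvd 2" using v(2) by (metis dvd_mult)
  have "2 dvd v * p ^ n" using v by simp
  then have "2 dvd v \<or> 2 dvd p ^ n" using t prime_elem_dvd_mult_iff by blast
  moreover have "\<not> 2 dvd v" using v t by (meson dvd_trans prime_elem_def)
  ultimately show "2 dvd p" using t prime_elem_dvd_power by blast
qed

lemma nonunit_dvd2:
  fixes p x :: "'a::idom"
  assumes u: "dvr_uniformizer p" and t: "prime_elem (2::'a)" and x: "\<not> x dvd 1"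
  shows "2 dvd x"
proof (cases "x = 0")
  case True then show ?thesis by simp
next
  case False
  then obtain v n where v: "v dvd 1" "x = v * p ^ n" using u unfolding dvr_uniformizer_def by blast
  have "n \<noteq> 0" using v x by (cases n) auto
  then have "p dvd p ^ n" by (simp add: dvd_power)
  then have "p dvd x" using v by (simp add: dvd_mult)
  then show ?thesis using two_p[OF u t] dvd_trans by blast
qed

lemma nonzero_not_all:
  fixes p x :: "'a::idom"
  assumes u: "dvr_uniformizer p" and t: "prime_elem (2::'a)" and x: "x \<noteq> 0"
  shows "\<exists>n. \<not> (2::'a) ^ n dvd x"
proof -
  obtain v m where v: "v dvd 1" "x = v * p ^ m" using u x unfolding dvr_uniformizer_def by blast
  have p0: "p \<noteq> 0" "\<not> p dvd 1" using u unfolding dvr_uniformizer_def by auto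
  have "\<not> (2::'a) ^ Suc m dvd x"
  proof
    assume "(2::'a) ^ Suc m dvd x"
    moreover have "p ^ Suc m dvd 2 ^ Suc m" using dvd_power_same[OF two_p(1)[OF u t]] by blast
    ultimately have "p ^ m * p dvd p ^ m * v" using v by (metis dvd_trans mult.commute power_Suc2)
    then have "p dvd v" using p0 by simp
    then show False using v p0 dvd_trans by blast
  qed
  then show ?thesis by blast
qed

lemma frob:
  fixes p u :: "'a::idom"
  assumes u: "dvr_uniformizer p" and t: "prime_elem (2::'a)" and f: "finite_residue_field p"
  shows "\<exists>c. 2 dvd (u - c * c)"
proof -
  obtain S where S: "finite S" "\<forall>x. \<exists>s\<in>S. p dvd (x - s)" using f unfolding finite_residue_field_def by blast
  define cls where "cls x = {y. (2::'a) dvd (y - x)}" for x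
  have cls_eq: "cls x = cls y \<longleftrightarrow> 2 dvd (x - y)" for x y
  proof
    assume "cls x = cls y"
    moreover have "x \<in> cls x" by (simp add: cls_def)
    ultimately show "2 dvd (x - y)" by (simp add: cls_def)
  next
    assume a: "2 dvd (x - y)"
    show "cls x = cls y" unfolding cls_def
    proof (intro set_eqI iffI; simp)
      fix z assume "2 dvd z - x" then show "2 dvd z - y" using a dvd_add[of 2 "z - x" "x - y"] by simp
    next
      fix z assume "2 dvd z - y" then show "2 dvd z - x" using a dvd_diff[of 2 "z - y" "x - y"] by simp
    qed
  qed
  define T where "T = range cls"
  have "T = cls ` S"
  proof
    show "T \<subseteq> cls ` S"
    proof
      fix C assume "C \<in> T"
      then obtain x where x: "C = cls x" by (auto simp: T_def)
      obtain s where "s \<in> S" "p dvd x - s" using S by blast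
      then have "2 dvd x - s" using two_p[OF u t] dvd_trans by blast
      then show "C \<in> cls ` S" using x cls_eq \<open>s \<in> S\<close> by blast
    qed
  qed (auto simp: T_def)
  then have fT: "finite T" using S by simp
  define g where "g C = {y. \<exists>x\<in>C. (2::'a) dvd (y - x * x)}" for C
  have gcls: "g (cls x) = cls (x * x)" for x
  proof (intro set_eqI iffI)
    fix y assume "y \<in> g (cls x)"
    then obtain z where z: "2 dvd z - x" "2 dvd y - z * z" by (auto simp: g_def cls_def)
    have "z * z - x * x = (z - x) * (z + x)" by (simp add: algebra_simps)
    then have "2 dvd z * z - x * x" using z by simp
    then have "2 dvd (y - z * z) + (z * z - x * x)" using z dvd_add by blast
    then show "y \<in> cls (x * x)" by (simp add: cls_def)
  next
    fix y assume "y \<in> cls (x * x)"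
    then have "2 dvd y - x * x" "x \<in> cls x" by (auto simp: cls_def)
    then show "y \<in> g (cls x)" unfolding g_def by blast
  qed
  have "inj_on g T"
  proof (rule inj_onI)
    fix C D assume "C \<in> T" "D \<in> T" "g C = g D"
    then obtain x y where xy: "C = cls x" "D = cls y" "cls (x * x) = cls (y * y)" by (auto simp: T_def gcls)
    then have h: "2 dvd x * x - y * y" using cls_eq by blast
    have "(x - y) * (x - y) = (x * x - y * y) - 2 * (y * (x - y))" by (simp add: algebra_simps)
    then have "2 dvd (x - y) * (x - y)" using h by (metis dvd_diff dvd_triv_left)
    then have "2 dvd x - y" using t prime_elem_dvd_mult_iff by blast
    then show "C = D" using xy cls_eq by blast
  qed
  moreover have "g ` T \<subseteq> T" by (auto simp: T_def gcls)
  ultimately have "g ` T = T" using fT endo_inj_surj by blast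
  then have "cls u \<in> g ` T" by (auto simp: T_def)
  then obtain c where "cls u = cls (c * c)" by (auto simp: T_def gcls)
  then show ?thesis using cls_eq by blast
qed



lemma int_dvd_of_int:
  assumes "(2::int) ^ n dvd d" shows "(2::'a::idom) ^ n dvd of_int d"
proof -
  obtain k where "d = 2 ^ n * k" using assms by blast
  then have "(of_int d :: 'a) = 2 ^ n * of_int k" by simp
  then show ?thesis by simp
qed

lemma of_int_dvd_int:
  assumes t: "prime_elem (2::'a::idom)"
  shows "(2::'a) ^ n dvd of_int d \<Longrightarrow> (2::int) ^ n dvd d"
proof (induction n arbitrary: d)
  case 0 then show ?case by simp
next
  case (Suc n)
  have "(2::'a) dvd of_int d" using Suc.prems by (metis dvd_mult_left power_Suc)
  have "even d"
  proof (rule ccontr)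
    assume "odd d"
    then obtain k where "d = 2 * k + 1" using oddE by blast
    then have "(of_int d :: 'a) = 2 * of_int k + 1" by simp
    then have "(2::'a) dvd 1" using \<open>(2::'a) dvd of_int d\<close> by (metis dvd_add_right_iff dvd_triv_left)
    then show False using t by (simp add: prime_elem_def)
  qed
  then obtain k where k: "d = 2 * k" by blast
  have "(2::'a) * 2 ^ n dvd 2 * of_int k" using Suc.prems k by simp
  moreover have "(2::'a) \<noteq> 0" using t by auto
  ultimately have "(2::'a) ^ n dvd of_int k" by simp
  then have "(2::int) ^ n dvd k" using Suc.IH by blast
  then show ?case using k by simp
qed

definition spec2 :: "'a::idom \<Rightarrow> nat \<Rightarrow> int \<Rightarrow> bool" where
  "spec2 a n m \<longleftrightarrow> 0 \<le> m \<and> m < 2 ^ n \<and> (2::'a) ^ n dvd (a - of_int m)"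

lemma spec2_uniq:
  assumes t: "prime_elem (2::'a::idom)" and "spec2 (a::'a) n m" "spec2 a n m'"
  shows "m = m'"
proof -
  have "(2::'a) ^ n dvd (a - of_int m') - (a - of_int m)" using assms unfolding spec2_def by (meson dvd_diff)
  then have "(2::'a) ^ n dvd of_int (m - m')" by simp
  then have "(2::int) ^ n dvd m - m'" using of_int_dvd_int[OF t] by blast
  then have "m mod 2 ^ n = m' mod 2 ^ n" by (simp add: mod_eq_dvd_iff)
  then show ?thesis using assms unfolding spec2_def by simp
qed

lemma spec2_ex:
  assumes r: "\<forall>a::'a::idom. 2 dvd a \<or> 2 dvd (a - 1)"
  shows "\<exists>m. spec2 (a::'a) n m"
proof (induction n)
  case 0 then show ?case by (auto simp: spec2_def intro: exI[of _ 0])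
next
  case (Suc n)
  then obtain m c where m: "0 \<le> m" "m < 2 ^ n" "a - of_int m = 2 ^ n * c" unfolding spec2_def by blast
  show ?case
  proof (cases "2 dvd c")
    case True
    then obtain c' where "c = 2 * c'" by blast
    then have "a - of_int m = 2 ^ Suc n * c'" using m by simp
    moreover have "m < 2 ^ Suc n" using m by simp
    ultimately show ?thesis using m unfolding spec2_def by (metis dvd_triv_left)
  next
    case False
    then obtain c' where c': "c - 1 = 2 * c'" using r by blast
    have "a - of_int (m + 2 ^ n) = 2 ^ n * (c - 1)" using m by (simp add: algebra_simps)
    also have "\<dots> = 2 ^ Suc n * c'" using c' by simp
    finally have "(2::'a) ^ Suc n dvd a - of_int (m + 2 ^ n)" by simp
    moreover have "m + 2 ^ n < 2 ^ Suc n" using m by simp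
    ultimately show ?thesis using m unfolding spec2_def
      by (metis add_increasing2 zero_le_numeral zero_le_power)
  qed
qed

definition phi2 :: "'a::idom \<Rightarrow> nat \<Rightarrow> int" where
  "phi2 a n = (THE m. spec2 a n m)"

lemma phi2_char:
  assumes t: "prime_elem (2::'a::idom)" and "spec2 (a::'a) n m"
  shows "phi2 a n = m"
  unfolding phi2_def using assms spec2_uniq[OF t] by blast

lemma phi2_spec:
  assumes t: "prime_elem (2::'a::idom)" and r: "\<forall>a::'a. 2 dvd a \<or> 2 dvd (a - 1)"
  shows "spec2 (a::'a) n (phi2 a n)"
  using spec2_ex[OF r, of a n] phi2_char[OF t] by metis

lemma carrier_mod:
  assumes "f \<in> z2_carrier" "k \<le> m"
  shows "f m mod 2 ^ k = f k"
  using assms(2)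
proof (induction m rule: dec_induct)
  case base
  then show ?case using assms(1) by (auto simp: z2_carrier_def)
next
  case (step m)
  have "(2::int) ^ k dvd 2 ^ m" using step by (simp add: le_imp_power_dvd)
  then have "f (Suc m) mod 2 ^ k = (f (Suc m) mod 2 ^ m) mod 2 ^ k" by (simp add: mod_mod_cancel)
  also have "\<dots> = f m mod 2 ^ k" using assms(1) by (simp add: z2_carrier_def)
  finally show ?case using step by simp
qed



lemma res01_iso:
  fixes p :: "'a::idom"
  assumes u: "dvr_uniformizer p" and t: "prime_elem (2::'a)" and c: "adically_complete p"
    and r: "\<forall>a::'a. 2 dvd a \<or> 2 dvd (a - 1)"
  shows "iso_to_Z2 TYPE('a)"
proof -
  note sp = phi2_spec[OF t r] and ch = phi2_char[OF t]
  have modd: "(2::'a) ^ n dvd of_int (x - x mod 2 ^ n)" for x n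
    by (rule int_dvd_of_int) simp
  have incar: "phi2 a \<in> z2_carrier" for a :: 'a
  proof -
    have "phi2 a (Suc n) mod 2 ^ n = phi2 a n" for n
    proof -
      let ?M = "phi2 a (Suc n)"
      have "(2::'a) ^ n dvd a - of_int ?M" using sp[of a "Suc n"] unfolding spec2_def
        by (metis dvd_mult_right power_Suc)
      then have "(2::'a) ^ n dvd (a - of_int ?M) + of_int (?M - ?M mod 2 ^ n)" using modd dvd_add by blast
      then have "spec2 a n (?M mod 2 ^ n)" unfolding spec2_def by simp
      from ch[OF this] show ?thesis by simp
    qed
    moreover have "0 \<le> phi2 a n \<and> phi2 a n < 2 ^ n" for n using sp[of a n] unfolding spec2_def by blast
    ultimately show ?thesis unfolding z2_carrier_def by blast
  qed
  have allz: "a = 0" if "\<forall>n. (2::'a) ^ n dvd a" for a :: 'a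
    using nonzero_not_all[OF u t] that by blast
  have inj: "inj (phi2 :: 'a \<Rightarrow> _)"
  proof (rule injI)
    fix a b :: 'a assume e: "phi2 a = phi2 b"
    have "(2::'a) ^ n dvd a - b" for n
    proof -
      have "(2::'a) ^ n dvd (a - of_int (phi2 a n)) - (b - of_int (phi2 b n))"
        using sp[of a n] sp[of b n] unfolding spec2_def by (meson dvd_diff)
      then show ?thesis using e by simp
    qed
    then show "a = b" using allz[of "a - b"] by simp
  qed
  have surj: "f \<in> range (phi2 :: 'a \<Rightarrow> _)" if f: "f \<in> z2_carrier" for f
  proof -
    define s where "s n = (of_int (f n) :: 'a)" for n
    have cau2: "(2::'a) ^ k dvd s m - s n" if "k \<le> m" "k \<le> n" for k m n
    proof -
      have "f m mod 2 ^ k = f n mod 2 ^ k" using carrier_mod[OF f] that by simp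
      then have "(2::int) ^ k dvd f m - f n" by (simp add: mod_eq_dvd_iff)
      from int_dvd_of_int[OF this, where 'a='a] show ?thesis unfolding s_def by simp
    qed
    have pk: "p ^ k dvd 2 ^ k" for k using dvd_power_same[OF two_p(1)[OF u t]] by blast
    have kp: "2 ^ k dvd p ^ k" for k using dvd_power_same[OF two_p(2)[OF u t]] by blast
    have "\<forall>k. \<exists>N. \<forall>m\<ge>N. \<forall>n\<ge>N. p ^ k dvd (s m - s n)"
    proof
      fix k
      have "\<forall>m\<ge>k. \<forall>n\<ge>k. p ^ k dvd (s m - s n)"
        using cau2 pk[of k] by (meson dvd_trans)
      then show "\<exists>N. \<forall>m\<ge>N. \<forall>n\<ge>N. p ^ k dvd (s m - s n)" by blast
    qed
    then obtain l where l: "\<forall>k. \<exists>N. \<forall>n\<ge>N. p ^ k dvd (s n - l)"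
      using c unfolding adically_complete_def by blast
    have "phi2 l n = f n" for n
    proof -
      obtain N where N: "\<forall>n'\<ge>N. p ^ n dvd (s n' - l)" using l by blast
      let ?n = "max N n"
      have "p ^ n dvd s ?n - l" using N by simp
      then have "(2::'a) ^ n dvd s ?n - l" using kp[of n] dvd_trans by blast
      moreover have "(2::'a) ^ n dvd s ?n - s n" using cau2 by simp
      ultimately have "(2::'a) ^ n dvd (s ?n - s n) - (s ?n - l)" by (meson dvd_diff)
      then have "spec2 l n (f n)" using f unfolding spec2_def z2_carrier_def s_def by simp
      from ch[OF this] show ?thesis by simp
    qed
    then have "phi2 l = f" by (rule ext)
    then show ?thesis by (metis rangeI)
  qed
  have bij: "bij_betw (phi2 :: 'a \<Rightarrow> _) UNIV z2_carrier"
  proof -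
    have "range (phi2 :: 'a \<Rightarrow> _) = z2_carrier" using incar surj by blast
    then show ?thesis unfolding bij_betw_def using inj by simp
  qed
  have add: "phi2 (a + b) = z2_add (phi2 a) (phi2 b)" for a b :: 'a
  proof
    fix n
    let ?x = "phi2 a n + phi2 b n"
    have "(2::'a) ^ n dvd (a - of_int (phi2 a n)) + (b - of_int (phi2 b n)) + of_int (?x - ?x mod 2 ^ n)"
      using sp[of a n] sp[of b n] modd unfolding spec2_def by (meson dvd_add)
    then have "spec2 (a + b) n (?x mod 2 ^ n)" unfolding spec2_def by (simp add: algebra_simps)
    from ch[OF this] show "phi2 (a + b) n = z2_add (phi2 a) (phi2 b) n" unfolding z2_add_def by simp
  qed
  have mul: "phi2 (a * b) = z2_mult (phi2 a) (phi2 b)" for a b :: 'a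
  proof
    fix n
    let ?x = "phi2 a n * phi2 b n"
    have "(2::'a) ^ n dvd (a - of_int (phi2 a n)) * b + of_int (phi2 a n) * (b - of_int (phi2 b n)) + of_int (?x - ?x mod 2 ^ n)"
    proof -
      have A: "(2::'a) ^ n dvd a - of_int (phi2 a n)" "(2::'a) ^ n dvd b - of_int (phi2 b n)"
        using sp[of a n] sp[of b n] unfolding spec2_def by auto
      have "(2::'a) ^ n dvd (a - of_int (phi2 a n)) * b" using A(1) by (rule dvd_mult2)
      moreover have "(2::'a) ^ n dvd of_int (phi2 a n) * (b - of_int (phi2 b n))" using A(2) by (rule dvd_mult)
      ultimately show ?thesis using modd[of n "phi2 a n * phi2 b n"] by (blast intro: dvd_add)
    qed
    then have "spec2 (a * b) n (?x mod 2 ^ n)" unfolding spec2_def by (simp add: algebra_simps)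
    from ch[OF this] show "phi2 (a * b) n = z2_mult (phi2 a) (phi2 b) n" unfolding z2_mult_def by simp
  qed
  have one: "phi2 (1::'a) = z2_one"
  proof
    fix n
    have "spec2 (1::'a) n (1 mod 2 ^ n)" unfolding spec2_def using modd[of n 1] by simp
    from ch[OF this] show "phi2 (1::'a) n = z2_one n" unfolding z2_one_def by simp
  qed
  show ?thesis unfolding iso_to_Z2_def
    by (rule exI[where x=phi2]) (use bij add mul one in simp)
qed



lemma iso_res01:
  assumes "iso_to_Z2 TYPE('a::idom)"
  shows "\<forall>a::'a. 2 dvd a \<or> 2 dvd (a - 1)"
proof -
  obtain \<phi> :: "'a \<Rightarrow> nat \<Rightarrow> int" where bij: "bij_betw \<phi> UNIV z2_carrier"
    and add: "\<And>a b. \<phi> (a + b) = z2_add (\<phi> a) (\<phi> b)"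
    and mul: "\<And>a b. \<phi> (a * b) = z2_mult (\<phi> a) (\<phi> b)"
    and one: "\<phi> 1 = z2_one"
    using assms unfolding iso_to_Z2_def by blast
  have inj: "inj \<phi>" and img: "range \<phi> = z2_carrier" using bij unfolding bij_betw_def by auto
  have key: "2 dvd (c - 1)" if c1: "\<phi> c 1 = 1" for c :: 'a
  proof -
    define f where "f = \<phi> c"
    have f: "f \<in> z2_carrier" using img f_def by blast
    have fb: "0 \<le> f n \<and> f n < 2 ^ n" for n using f unfolding z2_carrier_def by blast
    have fc: "f (Suc n) mod 2 ^ n = f n" for n using f unfolding z2_carrier_def by blast
    have odd: "f (Suc n) mod 2 = 1" for n
      using carrier_mod[OF f, of 1 "Suc n"] c1 f_def by simp
    define g where "g n = (f (Suc n) - 1) div 2" for n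
    have fg: "f (Suc n) = 1 + 2 * g n" for n
      using odd[of n] unfolding g_def by presburger
    have gc: "g \<in> z2_carrier"
    proof -
      have "0 \<le> g n \<and> g n < 2 ^ n" for n
        using fb[of "Suc n"] fg[of n] by auto
      moreover have "g (Suc n) mod 2 ^ n = g n" for n
      proof -
        have "f (Suc (Suc n)) mod 2 ^ Suc n = f (Suc n) mod 2 ^ Suc n"
          using fc[of "Suc n"] fb[of "Suc n"] by simp
        then have "(2::int) ^ Suc n dvd f (Suc (Suc n)) - f (Suc n)" by (simp add: mod_eq_dvd_iff)
        then have "2 * 2 ^ n dvd 2 * (g (Suc n) - g n)" using fg[of n] fg[of "Suc n"]
          by (simp add: algebra_simps)
        then have "2 ^ n dvd g (Suc n) - g n" by (simp only: mult_dvd_mono dvd_mult_cancel_left) simp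
        then have "g (Suc n) mod 2 ^ n = g n mod 2 ^ n" by (simp add: mod_eq_dvd_iff)
        also have "\<dots> = g n" using \<open>0 \<le> g n \<and> g n < 2 ^ n\<close> by simp
        finally show ?thesis .
      qed
      ultimately show ?thesis unfolding z2_carrier_def by blast
    qed
    then obtain b where b: "\<phi> b = g" proof -
      have "g \<in> range \<phi>" using img gc by simp
      then show ?thesis using that by blast
    qed
    have "\<phi> (1 + (1 + 1) * b) = f"
    proof
      fix n
      have "\<phi> (1 + (1 + 1) * b) n = (1 mod 2 ^ n + ((1 mod 2 ^ n + 1 mod 2 ^ n) mod 2 ^ n * g n) mod 2 ^ n) mod 2 ^ n"
      proof -
        have "\<phi> (1 + (1 + 1) * b) = z2_add z2_one (z2_mult (z2_add z2_one z2_one) g)"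
          by (simp only: add mul one b)
        then show ?thesis by (simp only: z2_add_def z2_mult_def z2_one_def)
      qed
      also have "\<dots> = (1 + 2 * g n) mod 2 ^ n"
        by (simp add: mod_simps)
      also have "\<dots> = f n" using fg[of n] fc[of n] by simp
      finally show "\<phi> (1 + (1 + 1) * b) n = f n" .
    qed
    then have "\<phi> c = \<phi> (1 + (1 + 1) * b)" using f_def by simp
    then have "c = 1 + (1 + 1) * b" by (rule injD[OF inj])
    then have "c = 1 + 2 * b" by (simp only: one_add_one)
    then show ?thesis by simp
  qed
  show ?thesis
  proof
    fix a :: 'a
    have a1: "\<phi> a 1 = 0 \<or> \<phi> a 1 = 1"
    proof -
      have "\<phi> a \<in> z2_carrier" using img by blast
      then have "0 \<le> \<phi> a 1 \<and> \<phi> a 1 < 2 ^ 1" unfolding z2_carrier_def by blast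
      then show ?thesis by auto
    qed
    show "2 dvd a \<or> 2 dvd (a - 1)"
    proof (cases "\<phi> a 1 = 1")
      case True then show ?thesis using key by blast
    next
      case False
      then have "\<phi> a 1 = 0" using a1 by blast
      then have "\<phi> (a + 1) 1 = 1" using add one by (simp add: z2_add_def z2_one_def)
      then have "2 dvd (a + 1) - 1" using key by blast
      then show ?thesis by simp
    qed
  qed
qed



lemma prim_nodiv:
  assumes t: "prime_elem (2::'a::idom)" and pv: "primitive ((x, y) :: 'a \<times> 'a)"
  shows "(x = 0 \<and> y = 0) \<or> \<not> (2 dvd x \<and> 2 dvd y)"
proof (rule ccontr)
  assume h: "\<not> ?thesis"
  then have dx: "2 dvd x" and dy: "2 dvd y" by auto
  let ?v = "(x, y)"
  obtain W where W: "is_submodule W" and sp: "\<forall>z. \<exists>r. \<exists>w\<in>W. z = add_pair (smul_pair r ?v) w"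
    and ni: "\<forall>r. smul_pair r ?v \<in> W \<longrightarrow> smul_pair r ?v = (0, 0)"
    using pv unfolding primitive_def by blast
  obtain r1 w1 where w1: "w1 \<in> W" "(1, 0) = add_pair (smul_pair r1 ?v) w1" using sp by blast
  obtain r2 w2 where w2: "w2 \<in> W" "(0, 1) = add_pair (smul_pair r2 ?v) w2" using sp by blast
  have "add_pair (smul_pair x w1) (smul_pair y w2) \<in> W" using W w1 w2 unfolding is_submodule_def by blast
  moreover have "add_pair (smul_pair x w1) (smul_pair y w2) = smul_pair (1 - x * r1 - y * r2) ?v"
  proof -
    obtain a1 b1 where "w1 = (a1, b1)" by fastforce
    moreover obtain a2 b2 where "w2 = (a2, b2)" by fastforce
    ultimately have e: "1 = r1 * x + a1" "0 = r1 * y + b1" "0 = r2 * x + a2" "1 = r2 * y + b2"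
      "w1 = (a1, b1)" "w2 = (a2, b2)"
      using w1 w2 by (auto simp: add_pair_def smul_pair_def)
    have "x * a1 + y * a2 = x * (1 - x * r1 - y * r2)"
      using e(1,3) by algebra
    moreover have "x * b1 + y * b2 = y * (1 - x * r1 - y * r2)"
      using e(2,4) by algebra
    ultimately show ?thesis using e(5,6) by (simp add: add_pair_def smul_pair_def algebra_simps)
  qed
  ultimately have "smul_pair (1 - x * r1 - y * r2) ?v \<in> W" by simp
  then have "smul_pair (1 - x * r1 - y * r2) ?v = (0, 0)" using ni by blast
  then have z: "(1 - x * r1 - y * r2) * x = 0" "(1 - x * r1 - y * r2) * y = 0"
    by (auto simp: smul_pair_def)
  have "1 - x * r1 - y * r2 \<noteq> 0"
  proof
    assume "1 - x * r1 - y * r2 = 0"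
    then have "1 = x * r1 + y * r2" by (simp add: algebra_simps)
    moreover have "2 dvd x * r1 + y * r2" using dx dy by simp
    ultimately have "(2::'a) dvd 1" by simp
    then show False using t by (simp add: prime_elem_def)
  qed
  then have "x = 0" "y = 0" using z by auto
  then show False using h by simp
qed

lemma unit_prim:
  assumes "x dvd 1 \<or> y dvd 1"
  shows "primitive ((x, y) :: 'a::idom \<times> 'a)"
  using assms
proof
  assume "x dvd 1"
  then obtain xi where xi: "1 = x * xi" by blast
  let ?W = "{(0, t) | t. True} :: ('a \<times> 'a) set"
  have "is_submodule ?W" unfolding is_submodule_def add_pair_def smul_pair_def by auto
  moreover have "\<exists>r. \<exists>w\<in>?W. z = add_pair (smul_pair r (x, y)) w" for z
  proof -
    obtain z1 z2 where z: "z = (z1, z2)" by fastforce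
    have "z1 = (z1 * xi) * x" using xi by (metis mult.commute mult.left_commute mult_1_right)
    then have "z = add_pair (smul_pair (z1 * xi) (x, y)) (0, z2 - z1 * xi * y)"
      using z by (simp add: add_pair_def smul_pair_def)
    then show ?thesis by blast
  qed
  moreover have "smul_pair r (x, y) = (0, 0)" if "smul_pair r (x, y) \<in> ?W" for r
  proof -
    have "r * x = 0" using that by (simp add: smul_pair_def)
    moreover have "x \<noteq> 0" using xi by auto
    ultimately have "r = 0" by simp
    then show ?thesis by (simp add: smul_pair_def)
  qed
  ultimately show ?thesis unfolding primitive_def by blast
next
  assume "y dvd 1"
  then obtain yi where yi: "1 = y * yi" by blast
  let ?W = "{(t, 0) | t. True} :: ('a \<times> 'a) set"
  have "is_submodule ?W" unfolding is_submodule_def add_pair_def smul_pair_def by auto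
  moreover have "\<exists>r. \<exists>w\<in>?W. z = add_pair (smul_pair r (x, y)) w" for z
  proof -
    obtain z1 z2 where z: "z = (z1, z2)" by fastforce
    have "z2 = (z2 * yi) * y" using yi by (metis mult.commute mult.left_commute mult_1_right)
    then have "z = add_pair (smul_pair (z2 * yi) (x, y)) (z1 - z2 * yi * x, 0)"
      using z by (simp add: add_pair_def smul_pair_def)
    then show ?thesis by blast
  qed
  moreover have "smul_pair r (x, y) = (0, 0)" if "smul_pair r (x, y) \<in> ?W" for r
  proof -
    have "r * y = 0" using that by (simp add: smul_pair_def)
    moreover have "y \<noteq> 0" using yi by auto
    ultimately have "r = 0" by simp
    then show ?thesis by (simp add: smul_pair_def)
  qed
  ultimately show ?thesis unfolding primitive_def by blast
qed



lemma Qf: "Qform (x, y) = x * x - y * y" by (simp add: Qform_def)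

theorem lemma5p1:
  assumes "nonarch_local_integer_ring TYPE('a::idom)"
    and "CHAR('a) \<noteq> 2"
    and "prime_elem (2::'a)"
  shows "(Q_values :: 'a set) = {u. u dvd 1} \<union> {4 * r | r. True} \<and>
         (Q_prim_values :: 'a set) =
           (if iso_to_Z2 TYPE('a) then {u. u dvd 1} \<union> {8 * r | r. True}
            else {u. u dvd 1} \<union> {4 * r | r. True})"
proof -
  note t = assms(3)
  obtain p :: 'a where u: "dvr_uniformizer p" and fr: "finite_residue_field p" and co: "adically_complete p"
    using assms(1) unfolding nonarch_local_integer_ring_def by blast
  have nu: "x dvd 1" if "\<not> 2 dvd x" for x :: 'a using nonunit_dvd2[OF u t] that by blast
  have n21: "\<not> (2::'a) dvd 1" using t by (simp add: prime_elem_def)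
  have un2: "\<not> 2 dvd x" if "x dvd 1" for x :: 'a using that n21 dvd_trans by blast
  have pm: "2 dvd a * b \<longleftrightarrow> 2 dvd a \<or> 2 dvd b" for a b :: 'a using t prime_elem_dvd_mult_iff by blast
  have fac: "x * x - y * y = (x - y) * (x + y)" for x y :: 'a by (simp add: algebra_simps)
  have odd_unit: "(x * x - y * y) dvd 1" if "\<not> 2 dvd x - y" for x y :: 'a
  proof -
    have "\<not> 2 dvd x + y"
    proof
      assume "2 dvd x + y"
      then have "2 dvd (x + y) - 2 * y" by (rule dvd_diff) simp
      moreover have "(x + y) - 2 * y = x - y" by (simp add: algebra_simps)
      ultimately show False using that by simp
    qed
    then have "\<not> 2 dvd (x * x - y * y)" unfolding fac pm using that by blast
    then show ?thesis using nu by blast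
  qed
  have even_4: "\<exists>\<alpha>. x - y = 2 * \<alpha> \<and> x * x - y * y = 4 * (\<alpha> * (\<alpha> + y))" if h: "2 dvd x - y" for x y :: 'a
  proof -
    obtain \<alpha> where a: "x - y = 2 * \<alpha>" using h by blast
    then have "x = y + 2 * \<alpha>" by (simp add: algebra_simps)
    then have "x * x - y * y = 4 * (\<alpha> * (\<alpha> + y))" by (simp add: algebra_simps)
    then show ?thesis using a by blast
  qed
  have unitQ: "\<exists>x y. Qform (x, y) = u" if hu: "u dvd 1" for u :: 'a
  proof -
    obtain c where "2 dvd u - c * c" using frob[OF u t fr] by blast
    then obtain tt where tt: "u - c * c = 2 * tt" by blast
    have "\<not> 2 dvd c"
    proof
      assume "2 dvd c"
      then have "2 dvd (u - c * c) + c * c" using tt by simp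
      then show False using hu un2 by simp
    qed
    then obtain ci where ci: "1 = c * ci" using nu by blast
    have "Qform (c + tt * ci, tt * ci) = c * c + 2 * tt * (c * ci)" by (simp add: Qf algebra_simps)
    also have "\<dots> = u" using ci tt by (simp add: algebra_simps)
    finally show ?thesis by blast
  qed
  have QV: "(Q_values :: 'a set) = {u. u dvd 1} \<union> {4 * r | r. True}"
  proof (intro set_eqI iffI)
    fix z :: 'a assume "z \<in> Q_values"
    then obtain x y where z: "z = x * x - y * y" unfolding Q_values_def by (auto simp: Qform_def)
    show "z \<in> {u. u dvd 1} \<union> {4 * r | r. True}"
    proof (cases "2 dvd x - y")
      case True
      then obtain \<alpha> where "x * x - y * y = 4 * (\<alpha> * (\<alpha> + y))" using even_4 by blast
      then have "z = 4 * (\<alpha> * (\<alpha> + y))" using z by simp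
      then show ?thesis by blast
    next
      case False
      then have "z dvd 1" using odd_unit z by simp
      then show ?thesis by blast
    qed
  next
    fix z :: 'a assume "z \<in> {u. u dvd 1} \<union> {4 * r | r. True}"
    then show "z \<in> Q_values"
    proof
      assume "z \<in> {u. u dvd 1}"
      then obtain x y where "Qform (x, y) = z" using unitQ by blast
      then show ?thesis unfolding Q_values_def by blast
    next
      assume "z \<in> {4 * r | r. True}"
      then obtain r where "z = 4 * r" by blast
      then have "z = Qform (r + 1, r - 1)" by (simp add: Qf algebra_simps)
      then show ?thesis unfolding Q_values_def by blast
    qed
  qed
  have primQ: "Qform (x, y) \<in> Q_prim_values" if "\<not> 2 dvd x" for x y :: 'a
    using unit_prim[of x y] nu[OF that] unfolding Q_prim_values_def by blast
  have unitP: "u \<in> Q_prim_values" if hu: "u dvd 1" for u :: 'a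
  proof -
    obtain x y where q: "Qform (x, y) = u" using unitQ[OF hu] by blast
    have "\<not> (2 dvd x \<and> 2 dvd y)"
    proof
      assume "2 dvd x \<and> 2 dvd y"
      then have "2 dvd x * x - y * y" by auto
      then show False using q hu un2 by (simp add: Qf)
    qed
    then have "x dvd 1 \<or> y dvd 1" using nu by blast
    then have "primitive (x, y)" by (rule unit_prim)
    then show ?thesis using q unfolding Q_prim_values_def by blast
  qed
  have PsubQ: "(Q_prim_values :: 'a set) \<subseteq> Q_values" unfolding Q_prim_values_def Q_values_def by blast
  have QP: "(Q_prim_values :: 'a set) =
           (if iso_to_Z2 TYPE('a) then {u. u dvd 1} \<union> {8 * r | r. True}
            else {u. u dvd 1} \<union> {4 * r | r. True})"
  proof (cases "iso_to_Z2 TYPE('a)")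
    case True
    have r01: "\<forall>a::'a. 2 dvd a \<or> 2 dvd (a - 1)" using iso_res01[OF True] .
    have "(Q_prim_values :: 'a set) = {u. u dvd 1} \<union> {8 * r | r. True}"
    proof (intro set_eqI iffI)
      fix z :: 'a assume "z \<in> Q_prim_values"
      then obtain x y where z: "z = x * x - y * y" and pv: "primitive (x, y)"
        unfolding Q_prim_values_def by (auto simp: Qform_def)
      show "z \<in> {u. u dvd 1} \<union> {8 * r | r. True}"
      proof (cases "2 dvd x - y")
        case False
      then have "z dvd 1" using odd_unit z by simp
      then show ?thesis by blast
      next
        case True
        then obtain \<alpha> where a0: "x - y = 2 * \<alpha>" "x * x - y * y = 4 * (\<alpha> * (\<alpha> + y))" using even_4 by blast
        then have a: "x - y = 2 * \<alpha>" "z = 4 * (\<alpha> * (\<alpha> + y))" using z by simp_all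
        show ?thesis
        proof (cases "x = 0 \<and> y = 0")
          case True then have "z = 8 * 0" using z by simp
          then show ?thesis by blast
        next
          case False
          then have nd: "\<not> (2 dvd x \<and> 2 dvd y)" using prim_nodiv[OF t pv] by blast
          show ?thesis
          proof (cases "2 dvd \<alpha>")
            case True
            then obtain a' where "\<alpha> = 2 * a'" by blast
            then have "z = 8 * (a' * (\<alpha> + y))" using a by simp
            then show ?thesis by blast
          next
            case F1: False
            show ?thesis
            proof (cases "2 dvd \<alpha> + y")
              case True
              then obtain b' where "\<alpha> + y = 2 * b'" by blast
              then have "z = 8 * (\<alpha> * b')" using a by simp
              then show ?thesis by blast
            next
              case False
              then have "2 dvd (\<alpha> + y) - 1" "2 dvd \<alpha> - 1" using r01 F1 by blast+
              then have "2 dvd ((\<alpha> + y) - 1) - (\<alpha> - 1)" by (rule dvd_diff)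
              then have dy: "2 dvd y" by simp
              have "x = y + 2 * \<alpha>" using a by (simp add: algebra_simps)
              then have "2 dvd x" using dy by simp
              then show ?thesis using nd dy by blast
            qed
          qed
        qed
      qed
    next
      fix z :: 'a assume "z \<in> {u. u dvd 1} \<union> {8 * r | r. True}"
      then show "z \<in> Q_prim_values"
      proof
        assume "z \<in> {u. u dvd 1}" then show ?thesis using unitP by blast
      next
        assume "z \<in> {8 * r | r. True}"
        then obtain r where "z = 8 * r" by blast
        then have "z = Qform (1 + 2 * r, 2 * r - 1)" by (simp add: Qf algebra_simps)
        moreover have "\<not> 2 dvd 1 + 2 * r"
        proof
          assume "2 dvd 1 + 2 * r"
          then have "2 dvd (1 + 2 * r) - 2 * r" by (rule dvd_diff) simp
          then show False using n21 by simp
        qed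
        ultimately show ?thesis using primQ by blast
      qed
    qed
    then show ?thesis using True by simp
  next
    case False
    have "\<not> (\<forall>a::'a. 2 dvd a \<or> 2 dvd (a - 1))" using res01_iso[OF u t co] False by blast
    then obtain c :: 'a where c: "\<not> 2 dvd c" "\<not> 2 dvd c - 1" by blast
    have "(Q_prim_values :: 'a set) = {u. u dvd 1} \<union> {4 * r | r. True}"
    proof (intro set_eqI iffI)
      fix z :: 'a assume "z \<in> Q_prim_values"
      then show "z \<in> {u. u dvd 1} \<union> {4 * r | r. True}" using PsubQ QV by blast
    next
      fix z :: 'a assume "z \<in> {u. u dvd 1} \<union> {4 * r | r. True}"
      then show "z \<in> Q_prim_values"
      proof
        assume "z \<in> {u. u dvd 1}" then show ?thesis using unitP by blast
      next
        assume "z \<in> {4 * r | r. True}"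
        then obtain r where z: "z = 4 * r" by blast
        show ?thesis
        proof (cases "2 dvd 1 + r")
          case False
          have "z = Qform (1 + r, r - 1)" using z by (simp add: Qf algebra_simps)
          then show ?thesis using primQ False by blast
        next
          case True
          obtain ci where ci: "1 = c * ci" using nu c by blast
          have "z = Qform (c + r * ci, r * ci - c)"
          proof -
            have "Qform (c + r * ci, r * ci - c) = 4 * r * (c * ci)" by (simp add: Qf algebra_simps)
            then show ?thesis using ci z by simp
          qed
          moreover have "\<not> 2 dvd c + r * ci"
          proof
            assume "2 dvd c + r * ci"
            then have "2 dvd c * (c + r * ci)" by simp
            moreover have "c * (c + r * ci) = c * c + r * (c * ci)" by (simp add: algebra_simps)
            ultimately have "2 dvd c * c + r" using ci by simp
            then have "2 dvd (c * c + r) - (1 + r)" using True by (rule dvd_diff)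
            moreover have "(c * c + r) - (1 + r) = (c - 1) * ((c - 1) + 2)" by (simp add: algebra_simps)
            ultimately have "2 dvd (c - 1) * ((c - 1) + 2)" by simp
            then have "2 dvd c - 1 \<or> 2 dvd (c - 1) + 2" using pm by blast
            moreover have "2 dvd (c - 1) + 2 \<Longrightarrow> 2 dvd c - 1"
            proof -
              assume "2 dvd (c - 1) + 2"
              then have "2 dvd ((c - 1) + 2) - 2" by (rule dvd_diff) simp
              then show "2 dvd c - 1" by simp
            qed
            ultimately have "2 dvd c - 1" by blast
            then show False using c by blast
          qed
          ultimately show ?thesis using primQ by blast
        qed
      qed
    qed
    then show ?thesis using False by simp
  qed
  show ?thesis using QV QP by blast
qed

end
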